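(* Let $P$ be a finite lattice and $R\in\mathrm{Tr}(P)$. The fiber $\chi^{-1}\{\chi^R\}$ of $\chi\colon\mathrm{Tr}(P)\to\mathrm{End}^\circ(P)$ has a least element, namely $$\tilde R=\langle\{(x,y)\in P\times P: \chi^R(y)=x\text{ or }x=y\}\rangle.$$
   Context: For a finite lattice $(P,\le)$, a transfer system on $P$ is a partial order $R$ on $P$ refining $\le$ (i.e. $x\,R\,y\Rightarrow x\le y$) that is closed under restriction: if $x\,R\,z$ and $y\le z$ then $(x\wedge y)\,R\,y$. $\mathrm{Tr}(P)$ is the set of transfer systems ordered by inclusion of relations. For a set $Q$ of pairs $(x,y)$ with $x\le y$, $\langle Q\rangle$ is the transfer system generated by $Q$, i.e. the intersection of all transfer systems containing $Q$. For $R\in\mathrm{Tr}(P)$, $\chi^R(x)$ is the least element of $\{y: y\,R\,x\}$ (which exists). $\mathrm{End}^\circ(P)$ is the set of interior operators (monotone $f$ with $f(x)\le x$, $f\circ f=f$), and $\chi\colon R\mapsto\chi^R$ lands in it. *)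

theory Defs
  imports Main "HOL-Library.Finite_Lattice"
begin

definition transfer_system :: "('a::finite_lattice) rel \<Rightarrow> bool" where
  "transfer_system R \<longleftrightarrow>
     refl R \<and> antisym R \<and> trans R \<and>
     (\<forall>x y. (x, y) \<in> R \<longrightarrow> x \<le> y) \<and>
     (\<forall>x y z. (x, z) \<in> R \<and> y \<le> z \<longrightarrow> (inf x y, y) \<in> R)"

definition Tr :: "('a::finite_lattice) rel set" where
  "Tr = {R. transfer_system R}"

definition gen_tr :: "('a::finite_lattice) rel \<Rightarrow> 'a rel" where
  "gen_tr Q = \<Inter> {R. transfer_system R \<and> Q \<subseteq> R}"

definition chi :: "('a::finite_lattice) rel \<Rightarrow> 'a \<Rightarrow> 'a" where
  "chi R x = (THE y. (y, x) \<in> R \<and> (\<forall>z. (z, x) \<in> R \<longrightarrow> y \<le> z))"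

end

theory Submission
  imports Defs
begin

lemma chi_least:
  fixes R :: "('a::finite_lattice) rel"
  assumes ts: "transfer_system R"
  shows "(chi R x, x) \<in> R \<and> (\<forall>z. (z, x) \<in> R \<longrightarrow> chi R x \<le> z)"
proof -
  let ?A = "{y. (y, x) \<in> R}"
  have rf: "(x, x) \<in> R" using ts unfolding transfer_system_def refl_on_def by blast
  have "finite ?A" by simp
  moreover have "?A \<noteq> {}" using rf by blast
  ultimately obtain m where m: "m \<in> ?A" and mmin: "\<forall>b\<in>?A. b \<le> m \<longrightarrow> m = b"
    using finite_has_minimal by blast
  have least: "\<forall>z. (z, x) \<in> R \<longrightarrow> m \<le> z"
  proof (intro allI impI)
    fix z assume z: "(z, x) \<in> R"
    have zx: "z \<le> x" using z ts unfolding transfer_system_def by blast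
    have "(inf m z, z) \<in> R" using ts m zx unfolding transfer_system_def by blast
    hence "(inf m z, x) \<in> R" using z ts unfolding transfer_system_def trans_def by blast
    hence "m = inf m z" using mmin by simp
    thus "m \<le> z" by (metis inf.cobounded2)
  qed
  have "chi R x = m" unfolding chi_def
  proof (rule the_equality)
    show "(m, x) \<in> R \<and> (\<forall>z. (z, x) \<in> R \<longrightarrow> m \<le> z)" using m least by simp
  next
    fix y assume "(y, x) \<in> R \<and> (\<forall>z. (z, x) \<in> R \<longrightarrow> y \<le> z)"
    thus "y = m" using m least by (simp add: order_antisym)
  qed
  thus ?thesis using m least by simp
qed

lemma le_ts: "transfer_system {(x::'a::finite_lattice, y). x \<le> y}"
  unfolding transfer_system_def refl_on_def antisym_def trans_def by (auto simp: le_infI2)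

lemma gen_tr_ts:
  fixes Q :: "('a::finite_lattice) rel"
  assumes "Q \<subseteq> {(x, y). x \<le> y}"
  shows "transfer_system (gen_tr Q)"
proof -
  let ?F = "{R. transfer_system R \<and> Q \<subseteq> R}"
  have ne: "{(x, y). x \<le> y} \<in> ?F" using le_ts assms by blast
  have sub: "gen_tr Q \<subseteq> {(x, y). x \<le> y}" unfolding gen_tr_def using ne by blast
  have all: "\<And>R. R \<in> ?F \<Longrightarrow> transfer_system R" by blast
  show ?thesis unfolding transfer_system_def
  proof (intro conjI)
    show "refl (gen_tr Q)" unfolding gen_tr_def refl_on_def transfer_system_def by blast
    show "antisym (gen_tr Q)" using sub unfolding antisym_def by (blast intro: order_antisym)
    show "trans (gen_tr Q)" unfolding gen_tr_def trans_def transfer_system_def by blast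
    show "\<forall>x y. (x, y) \<in> gen_tr Q \<longrightarrow> x \<le> y" using sub by blast
    show "\<forall>x y z. (x, z) \<in> gen_tr Q \<and> y \<le> z \<longrightarrow> (inf x y, y) \<in> gen_tr Q"
      unfolding gen_tr_def transfer_system_def by blast
  qed
qed

lemma gen_tr_sub: "transfer_system S \<Longrightarrow> Q \<subseteq> S \<Longrightarrow> gen_tr Q \<subseteq> S"
  unfolding gen_tr_def by blast

lemma gen_tr_sup: "Q \<subseteq> gen_tr Q"
  unfolding gen_tr_def by blast

theorem theorem2p12:
  fixes R :: "('a::finite_lattice) rel"
  assumes "R \<in> Tr"
  defines "Rt \<equiv> gen_tr {(x, y). chi R y = x \<or> x = y}"
  shows "Rt \<in> Tr \<and> chi Rt = chi R \<and>
         (\<forall>S \<in> Tr. chi S = chi R \<longrightarrow> Rt \<subseteq> S)"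
proof -
  let ?G = "{(x, y). chi R y = x \<or> x = y}"
  have tsR: "transfer_system R" using assms(1) unfolding Tr_def by simp
  note cR = chi_least[OF tsR]
  have Gle: "?G \<subseteq> {(x, y). x \<le> y}"
  proof
    fix p assume "p \<in> ?G"
    then obtain x y where p: "p = (x, y)" and "chi R y = x \<or> x = y" by blast
    moreover have "chi R y \<le> y" using cR[of y] tsR unfolding transfer_system_def by blast
    ultimately show "p \<in> {(x, y). x \<le> y}" by auto
  qed
  have GS: "?G \<subseteq> S" if "transfer_system S" "chi S = chi R" for S
  proof
    fix p assume "p \<in> ?G"
    then obtain x y where p: "p = (x, y)" and h: "chi R y = x \<or> x = y" by blast
    have "(chi S y, y) \<in> S" using chi_least[OF that(1)] by blast
    moreover have "(y, y) \<in> S" using that(1) unfolding transfer_system_def refl_on_def by blast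
    ultimately show "p \<in> S" using h p that(2) by auto
  qed
  have tsRt: "transfer_system Rt" unfolding Rt_def using gen_tr_ts[OF Gle] .
  have RtR: "Rt \<subseteq> R" unfolding Rt_def using gen_tr_sub[OF tsR GS[OF tsR refl]] .
  have GRt: "?G \<subseteq> Rt" unfolding Rt_def by (rule gen_tr_sup)
  have "chi Rt x = chi R x" for x
  proof -
    have "(chi R x, x) \<in> Rt" using GRt by blast
    hence a: "chi Rt x \<le> chi R x" using chi_least[OF tsRt] by blast
    have "(chi Rt x, x) \<in> R" using chi_least[OF tsRt] RtR by blast
    hence "chi R x \<le> chi Rt x" using cR by blast
    thus ?thesis using a by simp
  qed
  hence eq: "chi Rt = chi R" by blast
  show ?thesis
  proof (intro conjI ballI impI)
    show "Rt \<in> Tr" using tsRt unfolding Tr_def by simp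
    show "chi Rt = chi R" by (rule eq)
    fix S assume "S \<in> Tr" "chi S = chi R"
    hence "transfer_system S" unfolding Tr_def by simp
    thus "Rt \<subseteq> S" unfolding Rt_def using gen_tr_sub GS \<open>chi S = chi R\<close> by blast
  qed
qed

end
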